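(* Let $k_u(n)$ be the largest $k$ such that Maker has a strategy in the $k$-tournament-type game on $K_n$ guaranteeing that, at the end of the game, her digraph contains a copy of every tournament on $k$ vertices. Then $k_u(n)\le(1+o(1))\log_2 n$ as $n\to\infty$.
   Context: The game: Maker (moving first) and Breaker alternately claim one unclaimed edge of $K_n$, and each chooses an orientation for the claimed edge; the game ends when all edges are claimed. A tournament is a digraph with exactly one directed edge between each pair of distinct vertices. *)

theory Defs
  imports Complex_Main
begin

text \<open>Vertices of K_n are 0..n-1. A claimed edge together with its orientation is an
arc (u,v). Maker's digraph is the set M of arcs she claimed, Breaker's is B.\<close>

definition claimed :: "(nat \<times> nat) set \<Rightarrow> nat \<Rightarrow> nat \<Rightarrow> bool" where
  "claimed A u v \<longleftrightarrow> (u, v) \<in> A \<or> (v, u) \<in> A"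

definition legal_move :: "nat \<Rightarrow> (nat \<times> nat) set \<Rightarrow> (nat \<times> nat) set \<Rightarrow> nat \<times> nat \<Rightarrow> bool" where
  "legal_move n M B a \<longleftrightarrow> fst a < n \<and> snd a < n \<and> fst a \<noteq> snd a
      \<and> \<not> claimed (M \<union> B) (fst a) (snd a)"

definition game_over :: "nat \<Rightarrow> (nat \<times> nat) set \<Rightarrow> (nat \<times> nat) set \<Rightarrow> bool" where
  "game_over n M B \<longleftrightarrow> (\<forall>a. \<not> legal_move n M B a)"

definition is_tournament :: "nat \<Rightarrow> (nat \<times> nat) set \<Rightarrow> bool" where
  "is_tournament k T \<longleftrightarrow> T \<subseteq> {0..<k} \<times> {0..<k}
     \<and> (\<forall>i<k. (i, i) \<notin> T)
     \<and> (\<forall>i<k. \<forall>j<k. i \<noteq> j \<longrightarrow> ((i, j) \<in> T \<longleftrightarrow> (j, i) \<notin> T))"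

definition contains_copy :: "nat \<Rightarrow> (nat \<times> nat) set \<Rightarrow> nat \<Rightarrow> (nat \<times> nat) set \<Rightarrow> bool" where
  "contains_copy n D k T \<longleftrightarrow> (\<exists>f. inj_on f {0..<k} \<and> f ` {0..<k} \<subseteq> {0..<n}
      \<and> (\<forall>(i, j) \<in> T. (f i, f j) \<in> D))"

definition universal_goal :: "nat \<Rightarrow> nat \<Rightarrow> (nat \<times> nat) set \<Rightarrow> bool" where
  "universal_goal n k D \<longleftrightarrow> (\<forall>T. is_tournament k T \<longrightarrow> contains_copy n D k T)"

text \<open>maker_wins n k M B t: from the position in which Maker owns arcs M, Breaker owns arcs B,
and it is Maker's turn iff t, Maker has a strategy guaranteeing that her final digraph
contains a copy of every tournament on k vertices (finite game, so the least fixed point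
is exactly the set of winning positions).\<close>
inductive maker_wins :: "nat \<Rightarrow> nat \<Rightarrow> (nat \<times> nat) set \<Rightarrow> (nat \<times> nat) set \<Rightarrow> bool \<Rightarrow> bool"
  for n k where
  end_win: "game_over n M B \<Longrightarrow> universal_goal n k M \<Longrightarrow> maker_wins n k M B t"
| maker_move: "legal_move n M B a \<Longrightarrow> maker_wins n k (insert a M) B False
      \<Longrightarrow> maker_wins n k M B True"
| breaker_move: "\<not> game_over n M B
      \<Longrightarrow> (\<forall>a. legal_move n M B a \<longrightarrow> maker_wins n k M (insert a B) True)
      \<Longrightarrow> maker_wins n k M B False"

definition k_u :: "nat \<Rightarrow> nat" where
  "k_u n = (GREATEST k. maker_wins n k {} {} True)"

end

theory Submission
  imports Defs
begin

definition Ed :: "nat list \<Rightarrow> (nat \<times> nat) set" where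
  "Ed xs = {p \<in> set xs \<times> set xs. fst p < snd p}"

definition cw :: "(nat \<times> nat) set \<Rightarrow> (nat \<times> nat) set \<Rightarrow> nat \<times> nat \<Rightarrow> nat" where
  "cw M B p = (if claimed B (fst p) (snd p) then 0 else if claimed M (fst p) (snd p) then 2 else 1)"

definition ww :: "(nat \<times> nat) set \<Rightarrow> (nat \<times> nat) set \<Rightarrow> nat list \<Rightarrow> nat" where
  "ww M B xs = (\<Prod>p\<in>Ed xs. cw M B p)"

definition LL :: "nat \<Rightarrow> nat \<Rightarrow> nat list set" where
  "LL n k = {xs. set xs \<subseteq> {..<n} \<and> length xs = k}"

definition Phi :: "nat \<Rightarrow> nat \<Rightarrow> (nat \<times> nat) set \<Rightarrow> (nat \<times> nat) set \<Rightarrow> nat" where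
  "Phi n k M B = (\<Sum>xs\<in>LL n k. ww M B xs)"

definition Phie :: "nat \<Rightarrow> nat \<Rightarrow> (nat \<times> nat) set \<Rightarrow> (nat \<times> nat) set \<Rightarrow> nat \<times> nat \<Rightarrow> nat" where
  "Phie n k M B e = (\<Sum>xs\<in>LL n k. if e \<in> Ed xs then ww M B xs else 0)"

definition nrm :: "nat \<times> nat \<Rightarrow> nat \<times> nat" where
  "nrm a = (min (fst a) (snd a), max (fst a) (snd a))"

definition mx :: "nat \<Rightarrow> nat \<Rightarrow> (nat \<times> nat) set \<Rightarrow> (nat \<times> nat) set \<Rightarrow> nat" where
  "mx n k M B = Max (insert 0 ((\<lambda>a. Phie n k M B (nrm a)) ` {a. legal_move n M B a}))"

definition VV :: "nat \<Rightarrow> nat \<Rightarrow> (nat \<times> nat) set \<Rightarrow> (nat \<times> nat) set \<Rightarrow> bool \<Rightarrow> nat" where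
  "VV n k M B t = Phi n k M B + (if t then mx n k M B else 0)"

definition Inv :: "(nat \<times> nat) set \<Rightarrow> (nat \<times> nat) set \<Rightarrow> bool" where
  "Inv M B \<longleftrightarrow> (\<forall>u v. claimed M u v \<longrightarrow> \<not> claimed B u v) \<and> (\<forall>u v. (u, v) \<in> M \<longrightarrow> (v, u) \<notin> M)"

lemma finite_LL: "finite (LL n k)"
  unfolding LL_def by (rule finite_lists_length_eq) simp

lemma card_LL: "card (LL n k) = n ^ k"
  unfolding LL_def by (simp add: card_lists_length_eq)

lemma finite_Ed: "finite (Ed xs)"
  unfolding Ed_def by (rule finite_subset[of _ "set xs \<times> set xs"]) auto

lemma finite_legal: "finite {a. legal_move n M B a}"
  by (rule finite_subset[of _ "{..<n} \<times> {..<n}"]) (auto simp: legal_move_def)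

lemma legal_ins_M: "legal_move n (insert a M) B b \<Longrightarrow> legal_move n M B b \<and> b \<noteq> a"
  by (auto simp: legal_move_def claimed_def)

lemma legal_ins_B: "legal_move n M (insert a B) b \<Longrightarrow> legal_move n M B b \<and> b \<noteq> a"
  by (auto simp: legal_move_def claimed_def)

lemma legal_not_self: "legal_move n M B a \<Longrightarrow> \<not> legal_move n (insert a M) B a \<and> \<not> legal_move n M (insert a B) a"
  by (auto simp: legal_move_def claimed_def)

lemma cw_ins_M:
  assumes "legal_move n M B a" "fst p < snd p"
  shows "cw (insert a M) B p = (if p = nrm a then 2 else cw M B p)"
  using assms by (cases a; cases p) (auto simp: cw_def claimed_def legal_move_def nrm_def min_def max_def)

lemma cw_ins_B:
  assumes "legal_move n M B a" "fst p < snd p"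
  shows "cw M (insert a B) p = (if p = nrm a then 0 else cw M B p)"
  using assms by (cases a; cases p) (auto simp: cw_def claimed_def legal_move_def nrm_def min_def max_def)

lemma cw_nrm: "legal_move n M B a \<Longrightarrow> cw M B (nrm a) = 1"
  by (cases a) (auto simp: cw_def claimed_def legal_move_def nrm_def min_def max_def)


lemma ww_ins_M:
  assumes L: "legal_move n M B a"
  shows "ww (insert a M) B xs = (if nrm a \<in> Ed xs then 2 * ww M B xs else ww M B xs)"
proof -
  have eq: "\<And>p. p \<in> Ed xs \<Longrightarrow> p \<noteq> nrm a \<Longrightarrow> cw (insert a M) B p = cw M B p"
    using cw_ins_M[OF L] by (auto simp: Ed_def)
  show ?thesis
  proof (cases "nrm a \<in> Ed xs")
    case True
    have "ww (insert a M) B xs = cw (insert a M) B (nrm a) * (\<Prod>p\<in>Ed xs - {nrm a}. cw (insert a M) B p)"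
      unfolding ww_def using True finite_Ed by (simp add: prod.remove)
    also have "\<dots> = 2 * (\<Prod>p\<in>Ed xs - {nrm a}. cw M B p)"
      using cw_ins_M[OF L, of "nrm a"] True eq by (auto simp: Ed_def intro!: prod.cong)
    also have "\<dots> = 2 * ww M B xs"
      unfolding ww_def using True finite_Ed cw_nrm[OF L] by (simp add: prod.remove)
    finally show ?thesis using True by simp
  next
    case False
    have "(\<Prod>p\<in>Ed xs. cw (insert a M) B p) = (\<Prod>p\<in>Ed xs. cw M B p)" if "True"
      by (intro prod.cong refl) (use eq False in blast)
    then show ?thesis unfolding ww_def using False by simp
  qed
qed

lemma ww_ins_B:
  assumes L: "legal_move n M B a"
  shows "ww M (insert a B) xs = (if nrm a \<in> Ed xs then 0 else ww M B xs)"
proof -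
  have eq: "\<And>p. p \<in> Ed xs \<Longrightarrow> p \<noteq> nrm a \<Longrightarrow> cw M (insert a B) p = cw M B p"
    using cw_ins_B[OF L] by (auto simp: Ed_def)
  show ?thesis
  proof (cases "nrm a \<in> Ed xs")
    case True
    have "ww M (insert a B) xs = cw M (insert a B) (nrm a) * (\<Prod>p\<in>Ed xs - {nrm a}. cw M (insert a B) p)"
      unfolding ww_def using True finite_Ed by (simp add: prod.remove)
    also have "\<dots> = 0"
      using cw_ins_B[OF L, of "nrm a"] True by (auto simp: Ed_def)
    finally show ?thesis using True by simp
  next
    case False
    have "(\<Prod>p\<in>Ed xs. cw M (insert a B) p) = (\<Prod>p\<in>Ed xs. cw M B p)" if "True"
      by (intro prod.cong refl) (use eq False in blast)
    then show ?thesis unfolding ww_def using False by simp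
  qed
qed

lemma Phi_ins_M: "legal_move n M B a \<Longrightarrow> Phi n k (insert a M) B = Phi n k M B + Phie n k M B (nrm a)"
  unfolding Phi_def Phie_def by (auto simp add: ww_ins_M sum.distrib[symmetric] intro!: sum.cong)

lemma Phi_ins_B: "legal_move n M B a \<Longrightarrow> Phi n k M (insert a B) + Phie n k M B (nrm a) = Phi n k M B"
  unfolding Phi_def Phie_def by (auto simp add: ww_ins_B sum.distrib[symmetric] intro!: sum.cong)

lemma Phie_ins_B: "legal_move n M B a \<Longrightarrow> Phie n k M (insert a B) e \<le> Phie n k M B e"
  unfolding Phie_def by (rule sum_mono) (simp add: ww_ins_B)

lemma Phie_le_Phi: "Phie n k M B e \<le> Phi n k M B"
  unfolding Phie_def Phi_def by (rule sum_mono) simp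

lemma mx_ge: "legal_move n M B a \<Longrightarrow> Phie n k M B (nrm a) \<le> mx n k M B"
  unfolding mx_def by (rule Max_ge) (use finite_legal in auto)

lemma mx_le: "(\<And>a. legal_move n M B a \<Longrightarrow> Phie n k M B (nrm a) \<le> z) \<Longrightarrow> mx n k M B \<le> z"
  unfolding mx_def by (subst Max_le_iff) (use finite_legal in auto)

lemma Inv_M: "Inv M B \<Longrightarrow> legal_move n M B a \<Longrightarrow> Inv (insert a M) B"
  by (cases a) (auto simp: Inv_def claimed_def legal_move_def)

lemma Inv_B: "Inv M B \<Longrightarrow> legal_move n M B a \<Longrightarrow> Inv M (insert a B)"
  by (cases a) (auto simp: Inv_def claimed_def legal_move_def)


lemma card_pairs:
  fixes S :: "nat set"
  assumes "finite S"
  shows "2 * card {p \<in> S \<times> S. fst p < snd p} + card S = card S * card S"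
proof -
  define A where "A = {p \<in> S \<times> S. fst p < snd p}"
  define A' where "A' = {p \<in> S \<times> S. snd p < fst p}"
  define D where "D = (\<lambda>x. (x, x)) ` S"
  have fA: "finite A" "finite A'" "finite D" using assms unfolding A_def A'_def D_def by auto
  have "S \<times> S = A \<union> A' \<union> D" unfolding A_def A'_def D_def
    by (auto simp: image_iff)
  moreover have "A \<inter> A' = {}" "(A \<union> A') \<inter> D = {}" unfolding A_def A'_def D_def by auto
  ultimately have "card (S \<times> S) = card A + card A' + card D"
    using fA by (simp add: card_Un_disjoint)
  moreover have "A' = (\<lambda>(x, y). (y, x)) ` A" unfolding A_def A'_def by auto
  hence "card A' = card A" by (simp, subst card_image) (auto simp: inj_on_def)
  moreover have "card D = card S" unfolding D_def by (simp add: card_image inj_on_def)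
  ultimately show ?thesis unfolding A_def by (simp add: card_cartesian_product)
qed

lemma set_upt_Ed: "Ed [0..<k] = {p \<in> {0..<k} \<times> {0..<k}. fst p < snd p}"
  unfolding Ed_def by simp

lemma final_bound:
  assumes I: "Inv M B" and U: "universal_goal n k M"
  shows "2 ^ card (Ed [0..<k]) * 2 ^ card (Ed [0..<k]) \<le> Phi n k M B"
proof -
  define E0 where "E0 = Ed [0..<k]"
  define TT where "TT A = A \<union> {(j, i) | i j. (i, j) \<in> E0 - A}" for A
  have tour: "is_tournament k (TT A)" if "A \<subseteq> E0" for A
    using that unfolding is_tournament_def TT_def E0_def Ed_def
    by (auto simp: subset_iff; force)
  define P where "P A f \<longleftrightarrow> inj_on f {0..<k} \<and> f ` {0..<k} \<subseteq> {0..<n} \<and> (\<forall>(i, j) \<in> TT A. (f i, f j) \<in> M)" for A f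
  define ff where "ff A = (SOME f. P A f)" for A
  have ffp: "P A (ff A)" if "A \<subseteq> E0" for A
  proof -
    have "\<exists>f. P A f" using U tour[OF that] unfolding universal_goal_def contains_copy_def P_def by blast
    thus ?thesis unfolding ff_def by (rule someI_ex)
  qed
  define g where "g A = map (ff A) [0..<k]" for A
  have memA: "A = {p \<in> E0. (ff A (fst p), ff A (snd p)) \<in> M}" if "A \<subseteq> E0" for A
  proof -
    have "p \<in> A \<longleftrightarrow> (ff A (fst p), ff A (snd p)) \<in> M" if "p \<in> E0" for p
    proof (cases p)
      case (Pair i j)
      have a: "(i, j) \<in> TT A \<Longrightarrow> (ff A i, ff A j) \<in> M" "(j, i) \<in> TT A \<Longrightarrow> (ff A j, ff A i) \<in> M"
        using ffp[OF \<open>A \<subseteq> E0\<close>] unfolding P_def by auto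
      have ij: "i < j" using that Pair unfolding E0_def Ed_def by auto
      show ?thesis
      proof
        assume "p \<in> A" thus "(ff A (fst p), ff A (snd p)) \<in> M" using a Pair unfolding TT_def by auto
      next
        assume h: "(ff A (fst p), ff A (snd p)) \<in> M"
        show "p \<in> A"
        proof (rule ccontr)
          assume "p \<notin> A"
          hence "(j, i) \<in> TT A" using that Pair unfolding TT_def by auto
          hence "(ff A j, ff A i) \<in> M" using a by blast
          thus False using h Pair I unfolding Inv_def by auto
        qed
      qed
    qed
    thus ?thesis using that by auto
  qed
  have inj: "inj_on g (Pow E0)"
  proof (rule inj_onI)
    fix A A' assume A: "A \<in> Pow E0" and A': "A' \<in> Pow E0" and e: "g A = g A'"
    have "\<forall>i<k. ff A i = ff A' i"
    proof (intro allI impI)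
      fix i assume "i < k"
      hence "g A ! i = ff A i" "g A' ! i = ff A' i" unfolding g_def by auto
      thus "ff A i = ff A' i" using e by simp
    qed
    moreover have "\<forall>p\<in>E0. fst p < k \<and> snd p < k" unfolding E0_def Ed_def by auto
    ultimately have "{p \<in> E0. (ff A (fst p), ff A (snd p)) \<in> M} = {p \<in> E0. (ff A' (fst p), ff A' (snd p)) \<in> M}"
      by auto
    thus "A = A'" using memA A A' by auto
  qed
  have sub: "g ` Pow E0 \<subseteq> LL n k"
    using ffp unfolding g_def LL_def P_def by (fastforce simp: image_subset_iff)
  have cardE0: "2 * card E0 + k = k * k"
    using card_pairs[of "{0..<k}"] unfolding E0_def set_upt_Ed by simp
  have wv: "ww M B (g A) = 2 ^ card E0" if "A \<in> Pow E0" for A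
  proof -
    have A: "A \<subseteq> E0" using that by simp
    define S where "S = ff A ` {0..<k}"
    have EdS: "Ed (g A) = {p \<in> S \<times> S. fst p < snd p}" unfolding Ed_def g_def S_def by simp
    have cS: "card S = k" using ffp[OF A] unfolding S_def P_def by (simp add: card_image)
    have "2 * card (Ed (g A)) + k = k * k" using card_pairs[of S] cS EdS unfolding S_def by simp
    hence ce: "card (Ed (g A)) = card E0" using cardE0 by simp
    have "cw M B p = 2" if "p \<in> Ed (g A)" for p
    proof -
      have pS: "fst p \<in> S" "snd p \<in> S" "fst p < snd p" using that unfolding EdS by auto
      obtain i where i: "fst p = ff A i" "i < k" using pS(1) unfolding S_def by auto
      obtain j where j: "snd p = ff A j" "j < k" using pS(2) unfolding S_def by auto
      have p: "p = (ff A i, ff A j)" "i < k" "j < k" "ff A i < ff A j"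
        using i j pS(3) by (auto simp: prod_eq_iff)
      hence "i \<noteq> j" by auto
      hence "(i, j) \<in> TT A \<or> (j, i) \<in> TT A" using tour[OF A] p unfolding is_tournament_def by blast
      hence "claimed M (ff A i) (ff A j)" using ffp[OF A] unfolding P_def claimed_def by auto
      thus ?thesis using I p unfolding cw_def Inv_def by auto
    qed
    hence "ww M B (g A) = (\<Prod>p\<in>Ed (g A). 2)" unfolding ww_def by (rule prod.cong[OF refl])
    thus ?thesis using ce by simp
  qed
  have "2 ^ card E0 * 2 ^ card E0 = (\<Sum>A\<in>Pow E0. ww M B (g A))"
    using wv finite_Ed[of "[0..<k]"] unfolding E0_def[symmetric] by (simp add: card_Pow)
  also have "\<dots> = (\<Sum>xs\<in>g ` Pow E0. ww M B xs)" by (simp add: sum.reindex[OF inj])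
  also have "\<dots> \<le> Phi n k M B" unfolding Phi_def by (rule sum_mono2[OF finite_LL sub]) simp
  finally show ?thesis unfolding E0_def .
qed


lemma main_ind:
  assumes "maker_wins n k M B t"
  shows "Inv M B \<longrightarrow> 2 ^ card (Ed [0..<k]) * 2 ^ card (Ed [0..<k]) \<le> VV n k M B t"
  using assms
proof (induction rule: maker_wins.induct)
  case (end_win M B t)
  show ?case using final_bound[OF _ end_win(2)] unfolding VV_def by fastforce
next
  case (maker_move M B a)
  show ?case
  proof
    assume I: "Inv M B"
    have "2 ^ card (Ed [0..<k]) * 2 ^ card (Ed [0..<k]) \<le> Phi n k (insert a M) B"
      using maker_move.IH Inv_M[OF I maker_move.hyps(1)] unfolding VV_def by simp
    also have "\<dots> = Phi n k M B + Phie n k M B (nrm a)" using Phi_ins_M[OF maker_move.hyps(1)] .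
    also have "\<dots> \<le> VV n k M B True" unfolding VV_def using mx_ge[OF maker_move.hyps(1)] by simp
    finally show "2 ^ card (Ed [0..<k]) * 2 ^ card (Ed [0..<k]) \<le> VV n k M B True" .
  qed
next
  case (breaker_move M B)
  show ?case
  proof
    assume I: "Inv M B"
    define X where "X = (\<lambda>a. Phie n k M B (nrm a)) ` {a. legal_move n M B a}"
    have ne: "X \<noteq> {}" using breaker_move.hyps(1) unfolding game_over_def X_def by auto
    have fX: "finite X" unfolding X_def using finite_legal by simp
    obtain f where f: "legal_move n M B f" "Phie n k M B (nrm f) = Max X"
      using Max_in[OF fX ne] unfolding X_def by auto
    have fmax: "Phie n k M B (nrm a) \<le> Phie n k M B (nrm f)" if "legal_move n M B a" for a
      using Max_ge[OF fX, of "Phie n k M B (nrm a)"] that f(2) unfolding X_def by auto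
    have "2 ^ card (Ed [0..<k]) * 2 ^ card (Ed [0..<k]) \<le> VV n k M (insert f B) True"
      using breaker_move.IH f(1) Inv_B[OF I f(1)] by blast
    also have "\<dots> \<le> Phi n k M (insert f B) + Phie n k M B (nrm f)"
      unfolding VV_def
    proof (simp, rule mx_le)
      fix a assume "legal_move n M (insert f B) a"
      hence "legal_move n M B a" using legal_ins_B by blast
      thus "Phie n k M (insert f B) (nrm a) \<le> Phie n k M B (nrm f)"
        using Phie_ins_B[OF f(1)] fmax le_trans by blast
    qed
    also have "\<dots> = Phi n k M B" using Phi_ins_B[OF f(1)] .
    finally show "2 ^ card (Ed [0..<k]) * 2 ^ card (Ed [0..<k]) \<le> VV n k M B False"
      unfolding VV_def by simp
  qed
qed

lemma initial_bound:
  assumes "maker_wins n k {} {} True"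
  shows "2 ^ card (Ed [0..<k]) * 2 ^ card (Ed [0..<k]) \<le> 2 * n ^ k"
proof -
  have I: "Inv {} {}" unfolding Inv_def claimed_def by simp
  have w1: "ww {} {} xs = 1" for xs unfolding ww_def cw_def claimed_def by simp
  have P: "Phi n k {} {} = n ^ k" unfolding Phi_def w1 using card_LL by simp
  have "mx n k {} {} \<le> Phi n k {} {}" by (rule mx_le) (rule Phie_le_Phi)
  hence "VV n k {} {} True \<le> 2 * n ^ k" unfolding VV_def using P by simp
  thus ?thesis using main_ind[OF assms] I by simp
qed

lemma maker_wins_0: "card {a. legal_move n M B a} = c \<Longrightarrow> maker_wins n 0 M B t"
proof (induction c arbitrary: M B t rule: less_induct)
  case (less c M B t)
  have U: "universal_goal n 0 M'" for M'
    unfolding universal_goal_def is_tournament_def contains_copy_def by auto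
  have dec: "card {b. legal_move n M' B' b} < c"
    if "legal_move n M B a" "{b. legal_move n M' B' b} \<subseteq> {b. legal_move n M B b} - {a}" for a M' B'
  proof -
    have c1: "card {b. legal_move n M' B' b} \<le> card ({b. legal_move n M B b} - {a})"
      by (rule card_mono[OF _ that(2)]) (use finite_legal in auto)
    have "0 < c" using less.prems that(1) finite_legal[of n M B] card_gt_0_iff by blast
    have "card ({b. legal_move n M B b} - {a}) < c" using less.prems that(1) finite_legal \<open>0 < c\<close>
      by (simp add: card_Diff1_less)
    thus ?thesis using c1 by simp
  qed
  show ?case
  proof (cases "game_over n M B")
    case True
    then show ?thesis using U by (rule end_win)
  next
    case False
    then obtain a where a: "legal_move n M B a" unfolding game_over_def by auto
    show ?thesis
    proof (cases t)
      case True
      have "maker_wins n 0 (insert a M) B False"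
        using less.IH[OF dec[OF a], OF _ refl] legal_ins_M by blast
      then show ?thesis using True maker_move[OF a] by simp
    next
      case f: False
      have "\<forall>b. legal_move n M B b \<longrightarrow> maker_wins n 0 M (insert b B) True"
      proof (intro allI impI)
        fix b assume b: "legal_move n M B b"
        show "maker_wins n 0 M (insert b B) True"
          using less.IH[OF dec[OF b], OF _ refl] legal_ins_B by blast
      qed
      then show ?thesis using f breaker_move[OF False] by simp
    qed
  qed
qed


lemma pow_bound:
  assumes "maker_wins n k {} {} True" "2 \<le> k"
  shows "2 ^ (k - 2) \<le> n"
proof (rule ccontr)
  assume "\<not> 2 ^ (k - 2) \<le> n"
  hence lt: "n < 2 ^ (k - 2)" by simp
  obtain j where k: "k = j + 2" using assms(2) by (metis add.commute le_Suc_ex)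
  define m where "m = card (Ed [0..<k])"
  have cm: "2 * m + k = k * k"
    using card_pairs[of "{0..<k}"] unfolding m_def set_upt_Ed by simp
  hence m2: "2 * m = (j + 2) * (j + 1)" using k by (simp add: algebra_simps)
  have "2 ^ m * 2 ^ m \<le> 2 * n ^ k" using initial_bound[OF assms(1)] unfolding m_def .
  also have "n ^ k < (2 ^ j) ^ k" using lt k by (intro power_strict_mono) auto
  hence "2 * n ^ k < 2 * (2 ^ j) ^ k" by simp
  also have "2 * (2 ^ j) ^ k = (2::nat) ^ (j * (j + 2) + 1)"
  proof -
    have "(2 ^ j) ^ k = (2::nat) ^ (j * k)" by (simp add: power_mult)
    thus ?thesis using k by simp
  qed
  also have "\<dots> \<le> 2 ^ ((j + 2) * (j + 1))" by (intro power_increasing) (auto simp: algebra_simps)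
  also have "\<dots> = 2 ^ m * 2 ^ m" using m2 by (simp add: power_add[symmetric] mult_2[symmetric])
  finally show False by simp
qed

lemma ku_bound:
  assumes "1 \<le> n"
  shows "real (k_u n) \<le> log 2 (real n) + 2"
proof -
  let ?P = "\<lambda>k. maker_wins n k {} {} True"
  have P0: "?P 0" using maker_wins_0 by blast
  have bnd: "k \<le> n + 2" if "?P k" for k
  proof (cases "2 \<le> k")
    case True
    have "k - 2 < 2 ^ (k - 2)" by (rule less_exp)
    thus ?thesis using pow_bound[OF that True] True by linarith
  qed simp
  have Pk: "?P (k_u n)" unfolding k_u_def by (rule GreatestI_nat[of ?P 0 "n + 2", OF P0 bnd])
  show ?thesis
  proof (cases "2 \<le> k_u n")
    case True
    have "real (k_u n - 2) \<le> log 2 (real n)"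
      using le_log2_of_power[OF pow_bound[OF Pk True]] by simp
    thus ?thesis using True by simp
  next
    case False
    have "0 \<le> log 2 (real n)" using assms by simp
    thus ?thesis using False by simp
  qed
qed

theorem mainTheorem10:
  shows "\<forall>\<epsilon>>0. \<forall>\<^sub>F n in sequentially. real (k_u n) \<le> (1 + \<epsilon>) * log 2 (real n)"
proof (intro allI impI)
  fix \<epsilon> :: real assume e: "\<epsilon> > 0"
  define N where "N = nat \<lceil>2 powr (2 / \<epsilon>)\<rceil> + 1"
  show "\<forall>\<^sub>F n in sequentially. real (k_u n) \<le> (1 + \<epsilon>) * log 2 (real n)"
    unfolding eventually_sequentially
  proof (intro exI allI impI)
    fix n assume n: "N \<le> n"
    have pos: "0 < real n" using n unfolding N_def by simp
    have "2 powr (2 / \<epsilon>) \<le> real n" using n unfolding N_def by linarith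
    hence "2 / \<epsilon> \<le> log 2 (real n)" using pos by (simp add: le_log_iff)
    hence "2 \<le> \<epsilon> * log 2 (real n)" using e by (simp add: field_simps)
    moreover have "real (k_u n) \<le> log 2 (real n) + 2" using ku_bound pos by simp
    ultimately show "real (k_u n) \<le> (1 + \<epsilon>) * log 2 (real n)" by (simp add: algebra_simps)
  qed
qed

end
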